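(* Let $f$ be a periodic traveling wave of speed $c$ with $c\neq 0$ and $c^2\neq1$. If $\lambda\in\sigma(\mathrm{P})$ and $\operatorname{Re}\lambda\neq 0$, then exactly one of the two Floquet multipliers of (P) lies on the unit circle.
   Context: A traveling wave of speed $c$ is a real solution $f$ of $(c^2-1)f''+\sin f=0$, with energy $E$ given by $\tfrac12(c^2-1)(f')^2+1-\cos f=E$; periodic traveling waves are librational ($0<E<2$) or rotational ($E<0$ if $c^2<1$, $E>2$ if $c^2>1$), with fundamental period $T$ (smallest $T>0$ with $f(z+T)=f(z)\pmod{2\pi}$). Let $\gamma=1/(c^2-1)$. Equation (P): $p''-2c\gamma\lambda p'+\gamma(\lambda^2+\cos f(z))p=0$, written as a first-order system for $(p,p')$; its monodromy matrix is $F(T;\lambda)$ where $F$ is the fundamental matrix with $F(0;\lambda)=I$, and its Floquet multipliers are the eigenvalues of the monodromy matrix. $\sigma(\mathrm{P})$ is the set of $\lambda\in\mathbb{C}$ for which (P) has a nontrivial solution bounded on $\mathbb{R}$. *)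

theory Defs
  imports "HOL-Analysis.Analysis"
begin

definition traveling_wave :: "real \<Rightarrow> (real \<Rightarrow> real) \<Rightarrow> bool" where
  "traveling_wave c f \<longleftrightarrow>
     (\<forall>z. f differentiable (at z) \<and> deriv f differentiable (at z) \<and>
          (c\<^sup>2 - 1) * deriv (deriv f) z + sin (f z) = 0)"

text \<open>Energy (constant along a traveling wave; evaluated at z = 0).\<close>
definition energy :: "real \<Rightarrow> (real \<Rightarrow> real) \<Rightarrow> real" where
  "energy c f = (1/2) * (c\<^sup>2 - 1) * (deriv f 0)\<^sup>2 + 1 - cos (f 0)"

definition librational :: "real \<Rightarrow> (real \<Rightarrow> real) \<Rightarrow> bool" where
  "librational c f \<longleftrightarrow> 0 < energy c f \<and> energy c f < 2"

definition rotational :: "real \<Rightarrow> (real \<Rightarrow> real) \<Rightarrow> bool" where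
  "rotational c f \<longleftrightarrow> (c\<^sup>2 < 1 \<and> energy c f < 0) \<or> (c\<^sup>2 > 1 \<and> energy c f > 2)"

definition periodic_tw :: "real \<Rightarrow> (real \<Rightarrow> real) \<Rightarrow> bool" where
  "periodic_tw c f \<longleftrightarrow> traveling_wave c f \<and> (librational c f \<or> rotational c f)"

definition period_mod_2pi :: "(real \<Rightarrow> real) \<Rightarrow> real \<Rightarrow> bool" where
  "period_mod_2pi f T \<longleftrightarrow> (\<forall>z. \<exists>k::int. f (z + T) = f z + 2 * pi * of_int k)"

definition fundamental_period :: "(real \<Rightarrow> real) \<Rightarrow> real \<Rightarrow> bool" where
  "fundamental_period f T \<longleftrightarrow> T > 0 \<and> period_mod_2pi f T \<and>
      (\<forall>S. 0 < S \<and> S < T \<longrightarrow> \<not> period_mod_2pi f S)"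

definition gam :: "real \<Rightarrow> real" where
  "gam c = 1 / (c\<^sup>2 - 1)"

definition solP :: "real \<Rightarrow> (real \<Rightarrow> real) \<Rightarrow> complex \<Rightarrow> (real \<Rightarrow> complex) \<Rightarrow> (real \<Rightarrow> complex) \<Rightarrow> bool" where
  "solP c f lam p q \<longleftrightarrow>
     (\<forall>z. (p has_vector_derivative q z) (at z) \<and>
          (q has_vector_derivative
             (of_real (2 * c * gam c) * lam * q z
              - of_real (gam c) * (lam\<^sup>2 + of_real (cos (f z))) * p z)) (at z))"

definition sigmaP :: "real \<Rightarrow> (real \<Rightarrow> real) \<Rightarrow> complex set" where
  "sigmaP c f = {lam. \<exists>p q. solP c f lam p q \<and> (\<exists>z. p z \<noteq> 0) \<and> bounded (range p)}"

definition fundamental_sols ::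
  "real \<Rightarrow> (real \<Rightarrow> real) \<Rightarrow> complex \<Rightarrow> (real \<Rightarrow> complex) \<Rightarrow> (real \<Rightarrow> complex)
     \<Rightarrow> (real \<Rightarrow> complex) \<Rightarrow> (real \<Rightarrow> complex) \<Rightarrow> bool" where
  "fundamental_sols c f lam p1 q1 p2 q2 \<longleftrightarrow>
     solP c f lam p1 q1 \<and> solP c f lam p2 q2 \<and>
     p1 0 = 1 \<and> q1 0 = 0 \<and> p2 0 = 0 \<and> q2 0 = 1"

definition fund_matrix ::
  "(real \<Rightarrow> complex) \<Rightarrow> (real \<Rightarrow> complex) \<Rightarrow> (real \<Rightarrow> complex) \<Rightarrow> (real \<Rightarrow> complex)
     \<Rightarrow> real \<Rightarrow> complex^2^2" where
  "fund_matrix p1 q1 p2 q2 z =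
     (\<chi> i j. if i = 1 then (if j = 1 then p1 z else p2 z)
             else (if j = 1 then q1 z else q2 z))"

text \<open>The two Floquet multipliers (eigenvalues of M, with algebraic multiplicity)
  are the roots mu1, mu2 of the characteristic polynomial det (mu I - M).\<close>
definition floquet_multipliers :: "complex^2^2 \<Rightarrow> complex \<Rightarrow> complex \<Rightarrow> bool" where
  "floquet_multipliers M \<mu>1 \<mu>2 \<longleftrightarrow> (\<forall>\<mu>. det (mat \<mu> - M) = (\<mu> - \<mu>1) * (\<mu> - \<mu>2))"

end

theory Submission
  imports Defs
begin

definition solG :: "complex \<Rightarrow> (real \<Rightarrow> complex) \<Rightarrow> (real \<Rightarrow> complex) \<Rightarrow> (real \<Rightarrow> complex) \<Rightarrow> bool" where
  "solG A B p q \<longleftrightarrow> (\<forall>z. (p has_vector_derivative q z) (at z) \<and>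
      (q has_vector_derivative (A * q z - B z * p z)) (at z))"

lemma solG_comb:
  assumes "solG A B p q" "solG A B p' q'"
  shows "solG A B (\<lambda>z. a * p z + b * p' z) (\<lambda>z. a * q z + b * q' z)"
  unfolding solG_def
proof (intro allI conjI)
  fix z
  show "((\<lambda>z. a * p z + b * p' z) has_vector_derivative a * q z + b * q' z) (at z)"
    using assms by (intro has_vector_derivative_add has_vector_derivative_mult_right) (auto simp: solG_def)
  have "((\<lambda>z. a * q z + b * q' z) has_vector_derivative
      a * (A * q z - B z * p z) + b * (A * q' z - B z * p' z)) (at z)"
    using assms by (intro has_vector_derivative_add has_vector_derivative_mult_right) (auto simp: solG_def)
  moreover have "a * (A * q z - B z * p z) + b * (A * q' z - B z * p' z)
      = A * (a * q z + b * q' z) - B z * (a * p z + b * p' z)"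
    by (simp add: algebra_simps)
  ultimately show "((\<lambda>z. a * q z + b * q' z) has_vector_derivative
      A * (a * q z + b * q' z) - B z * (a * p z + b * p' z)) (at z)" by simp
qed

lemma shift_deriv:
  assumes "(g has_vector_derivative g') (at (z + s))"
  shows "((\<lambda>z. g (z + s)) has_vector_derivative g') (at z)"
proof -
  have "((\<lambda>z. z + s) has_vector_derivative 1) (at z)"
    by (auto intro!: derivative_eq_intros)
  from vector_diff_chain_at[OF this assms] show ?thesis by (simp add: o_def)
qed

lemma solG_shift:
  assumes "solG A B p q" "\<forall>z. B (z + s) = B z"
  shows "solG A B (\<lambda>z. p (z + s)) (\<lambda>z. q (z + s))"
  unfolding solG_def
proof (intro allI conjI)
  fix z
  show "((\<lambda>z. p (z + s)) has_vector_derivative q (z + s)) (at z)"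
    using assms by (intro shift_deriv) (auto simp: solG_def)
  have "((\<lambda>z. q (z + s)) has_vector_derivative A * q (z + s) - B (z + s) * p (z + s)) (at z)"
    using assms(1) by (intro shift_deriv) (auto simp: solG_def)
  then show "((\<lambda>z. q (z + s)) has_vector_derivative A * q (z + s) - B z * p (z + s)) (at z)"
    using assms(2) by simp
qed

lemma wronski:
  assumes "solG A B pa qa" "solG A B pb qb"
  shows "pa z * qb z - qa z * pb z = (pa 0 * qb 0 - qa 0 * pb 0) * exp (A * of_real z)"
proof -
  define g where "g z = (pa z * qb z - qa z * pb z) * exp (- (A * of_real z))" for z
  have ex: "((\<lambda>z. exp (- (A * of_real z))) has_vector_derivative (exp (- (A * of_real z)) * (- A))) (at z)" for z
  proof -
    have "((\<lambda>w. exp (- (A * w))) has_field_derivative (exp (- (A * of_real z)) * (- A))) (at (of_real z))"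
      by (auto intro!: derivative_eq_intros)
    from has_vector_derivative_real_field[OF this] show ?thesis by simp
  qed
  have d: "(g has_vector_derivative 0) (at z within UNIV)" for z
  proof -
    have "(g has_vector_derivative
       (pa z * (A * qb z - B z * pb z) + qa z * qb z - (qa z * qb z + (A * qa z - B z * pa z) * pb z))
        * exp (- (A * of_real z)) + (pa z * qb z - qa z * pb z) * (exp (- (A * of_real z)) * (- A))) (at z)"
      unfolding g_def
      apply (rule has_vector_derivative_eq_rhs)
       apply (rule has_vector_derivative_mult[OF has_vector_derivative_diff[OF has_vector_derivative_mult has_vector_derivative_mult] ex])
      using assms by (auto simp: solG_def algebra_simps)
    moreover have "(pa z * (A * qb z - B z * pb z) + qa z * qb z - (qa z * qb z + (A * qa z - B z * pa z) * pb z))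
        * exp (- (A * of_real z)) + (pa z * qb z - qa z * pb z) * (exp (- (A * of_real z)) * (- A)) = 0"
      by (simp add: algebra_simps)
    ultimately show ?thesis by simp
  qed
  obtain k where k: "\<And>x. x \<in> UNIV \<Longrightarrow> g x = k"
    using has_vector_derivative_zero_constant[of UNIV g] d by auto
  have "g z = g 0" using k by simp
  then have "(pa z * qb z - qa z * pb z) * exp (- (A * of_real z)) * exp (A * of_real z)
     = (pa 0 * qb 0 - qa 0 * pb 0) * exp (A * of_real z)"
    by (simp add: g_def)
  moreover have "exp (- (A * of_real z)) * exp (A * of_real z) = 1"
    by (metis exp_minus_inverse mult.commute)
  ultimately show ?thesis by (metis mult.assoc mult.right_neutral)
qed


lemma solG_repr:
  assumes s1: "solG A B p1 q1" and s2: "solG A B p2 q2"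
    and i: "p1 0 = 1" "q1 0 = 0" "p2 0 = 0" "q2 0 = 1"
    and s: "solG A B p q"
  shows "p z = p 0 * p1 z + q 0 * p2 z \<and> q z = p 0 * q1 z + q 0 * q2 z"
proof -
  define u where "u z = 1 * p z + (-1) * (p 0 * p1 z + q 0 * p2 z)" for z
  define w where "w z = 1 * q z + (-1) * (p 0 * q1 z + q 0 * q2 z)" for z
  have sc: "solG A B (\<lambda>z. p 0 * p1 z + q 0 * p2 z) (\<lambda>z. p 0 * q1 z + q 0 * q2 z)"
    by (rule solG_comb[OF s1 s2])
  have su: "solG A B u w"
    unfolding u_def[abs_def] w_def[abs_def] by (rule solG_comb[OF s sc])
  have u0: "u 0 = 0" "w 0 = 0" using i by (simp_all add: u_def w_def)
  have W1: "u z * q1 z - w z * p1 z = 0"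
    using wronski[OF su s1, of z] u0 by simp
  have W2: "u z * q2 z - w z * p2 z = 0"
    using wronski[OF su s2, of z] u0 by simp
  have W12: "p1 z * q2 z - q1 z * p2 z \<noteq> 0"
    using wronski[OF s1 s2, of z] i by simp
  have "u z * (p1 z * q2 z - q1 z * p2 z) = p1 z * (u z * q2 z - w z * p2 z) - p2 z * (u z * q1 z - w z * p1 z)"
    by (simp add: algebra_simps)
  then have "u z = 0" using W1 W2 W12 by simp
  have "w z * (p1 z * q2 z - q1 z * p2 z) = q1 z * (u z * q2 z - w z * p2 z) - q2 z * (u z * q1 z - w z * p1 z)"
    by (simp add: algebra_simps)
  then have "w z = 0" using W1 W2 W12 by simp
  with \<open>u z = 0\<close> show ?thesis
    by (simp add: u_def w_def algebra_simps add_eq_0_iff2)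
qed

lemma pow_bounded:
  fixes r a :: complex
  assumes "\<forall>n. cmod (r ^ n * a) \<le> K" "a \<noteq> 0"
  shows "cmod r \<le> 1"
proof (rule ccontr)
  assume "\<not> cmod r \<le> 1"
  then have "1 < cmod r" by simp
  from real_arch_pow[OF this, of "K / cmod a"] obtain n where n: "K / cmod a < cmod r ^ n" by blast
  have "cmod r ^ n * cmod a \<le> K" using assms(1)[rule_format, of n] by (simp add: norm_mult norm_power)
  then have "cmod r ^ n \<le> K / cmod a" using assms(2) by (simp add: field_simps)
  with n show False by simp
qed

lemma geo_zero:
  fixes g :: "real \<Rightarrow> complex"
  assumes "\<forall>y. g (y + s) = r * g y" "\<forall>y. cmod (g y) \<le> K" "cmod r > 1"
  shows "g y = 0"
proof (rule ccontr)
  assume ne: "g y \<noteq> 0"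
  have "g (y + real n * s) = r ^ n * g y" for n
  proof (induction n)
    case 0 then show ?case by simp
  next
    case (Suc n)
    have "g (y + real (Suc n) * s) = g ((y + real n * s) + s)" by (simp add: algebra_simps)
    also have "\<dots> = r * g (y + real n * s)" using assms(1) by simp
    finally show ?case using Suc by simp
  qed
  then have "\<forall>n. cmod (r ^ n * g y) \<le> K" using assms(2) by metis
  from pow_bounded[OF this ne] assms(3) show False by simp
qed

lemma orbit:
  fixes p :: "real \<Rightarrow> complex"
  assumes h: "\<forall>y. p y * p (y + s + s) = p (y + s) ^ 2" and n0: "p y0 \<noteq> 0" "p (y0 + s) \<noteq> 0"
  shows "p (y0 + real n * s) = (p (y0 + s) / p y0) ^ n * p y0"
proof -
  define \<rho> where "\<rho> = p (y0 + s) / p y0"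
  have \<rho>0: "\<rho> \<noteq> 0" using n0 by (simp add: \<rho>_def)
  have "p (y0 + real n * s) = \<rho> ^ n * p y0 \<and> p (y0 + real (Suc n) * s) = \<rho> ^ Suc n * p y0"
  proof (induction n)
    case 0 then show ?case using n0 by (simp add: \<rho>_def)
  next
    case (Suc n)
    have e: "y0 + real (Suc (Suc n)) * s = y0 + real n * s + s + s"
      "y0 + real (Suc n) * s = y0 + real n * s + s" by (simp_all add: algebra_simps)
    have "p (y0 + real n * s) * p (y0 + real (Suc (Suc n)) * s) = p (y0 + real (Suc n) * s) ^ 2"
      using h e by metis
    then have "\<rho> ^ n * p y0 * p (y0 + real (Suc (Suc n)) * s) = (\<rho> ^ Suc n * p y0) ^ 2"
      using Suc by simp
    then have "\<rho> ^ n * p y0 * p (y0 + real (Suc (Suc n)) * s) = \<rho> ^ n * p y0 * (\<rho> ^ Suc (Suc n) * p y0)"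
      by (simp add: power2_eq_square algebra_simps)
    then have "p (y0 + real (Suc (Suc n)) * s) = \<rho> ^ Suc (Suc n) * p y0"
      using \<rho>0 n0 by simp
    then show ?case using Suc by simp
  qed
  then show ?thesis by (simp add: \<rho>_def)
qed


lemma det_char:
  "det (mat \<mu> - fund_matrix p1 q1 p2 q2 T) = (\<mu> - p1 T) * (\<mu> - q2 T) - p2 T * q1 T"
  by (simp add: det_2 fund_matrix_def mat_def)

theorem lemma3p4:
  fixes c T :: real and f :: "real \<Rightarrow> real" and lam :: complex
    and p1 q1 p2 q2 :: "real \<Rightarrow> complex"
  assumes "c \<noteq> 0" and "c\<^sup>2 \<noteq> 1"
    and "periodic_tw c f"
    and "fundamental_period f T"
    and "lam \<in> sigmaP c f" and "Re lam \<noteq> 0"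
    and "fundamental_sols c f lam p1 q1 p2 q2"
  shows "\<forall>\<mu>1 \<mu>2. floquet_multipliers (fund_matrix p1 q1 p2 q2 T) \<mu>1 \<mu>2 \<longrightarrow>
           ((cmod \<mu>1 = 1) \<noteq> (cmod \<mu>2 = 1))"
proof -
  define A where "A = of_real (2 * c * gam c) * lam"
  define B where "B z = of_real (gam c) * (lam\<^sup>2 + of_real (cos (f z)))" for z
  have PG: "solP c f lam p q \<longleftrightarrow> solG A B p q" for p q
    by (simp add: solP_def solG_def A_def B_def)
  have T0: "T > 0" and per: "period_mod_2pi f T"
    using assms(4) by (auto simp: fundamental_period_def)
  have BT: "\<forall>z. B (z + T) = B z"
  proof
    fix z
    obtain k :: int where "f (z + T) = f z + 2 * pi * of_int k"
      using per by (auto simp: period_mod_2pi_def)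
    then have "cos (f (z + T)) = cos (f z)" using sin_cos_eq_iff by metis
    then show "B (z + T) = B z" by (simp add: B_def)
  qed
  have g0: "gam c \<noteq> 0" using assms(2) by (simp add: gam_def)
  obtain p q where sol: "solG A B p q" and pnz: "\<exists>z. p z \<noteq> 0" and bd: "bounded (range p)"
    using assms(5) unfolding sigmaP_def mem_Collect_eq PG by blast
  obtain Bd where Bd: "\<And>z. cmod (p z) \<le> Bd" using bd by (auto simp: bounded_iff)
  obtain z0 where z0: "p z0 \<noteq> 0" using pnz by blast
  have s1: "solG A B p1 q1" and s2: "solG A B p2 q2"
    and i: "p1 0 = 1" "q1 0 = 0" "p2 0 = 0" "q2 0 = 1"
    using assms(7) by (auto simp: fundamental_sols_def PG)
  define t where "t = p1 T + q2 T"
  define D where "D = p1 T * q2 T - p2 T * q1 T"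
  have DE: "D = exp (A * of_real T)"
    using wronski[OF s1 s2, of T] i by (simp add: D_def mult.commute)
  have D0: "D \<noteq> 0" using DE by simp
  have ReA: "Re (A * of_real T) = 2 * c * gam c * T * Re lam" by (simp add: A_def)
  have "2 * c * gam c * T * Re lam \<noteq> 0" using assms(1,6) g0 T0 by simp
  then have D1: "cmod D \<noteq> 1" using DE ReA by simp
  have w1: "solG A B (\<lambda>z. p (z + T)) (\<lambda>z. q (z + T))" by (rule solG_shift[OF sol BT])
  have w2: "solG A B (\<lambda>z. p (z + T + T)) (\<lambda>z. q (z + T + T))" by (rule solG_shift[OF w1 BT])
  have rec: "p (z + T + T) = t * p (z + T) - D * p z" for z
  proof -
    note r0 = solG_repr[OF s1 s2 i sol]
    note r1 = solG_repr[OF s1 s2 i w1]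
    note r2 = solG_repr[OF s1 s2 i w2]
    have a: "p z = p 0 * p1 z + q 0 * p2 z" using r0 by blast
    have b: "p (z + T) = p T * p1 z + q T * p2 z" using r1 by simp
    have c: "p (z + T + T) = p (T + T) * p1 z + q (T + T) * p2 z" using r2 by simp
    have d: "p T = p 0 * p1 T + q 0 * p2 T" "q T = p 0 * q1 T + q 0 * q2 T" using r0 by blast+
    have e: "p (T + T) = p T * p1 T + q T * p2 T" "q (T + T) = p T * q1 T + q T * q2 T"
      using r1[of T] by simp_all
    show ?thesis unfolding a b c e d t_def D_def by (simp add: algebra_simps)
  qed
  define h where "h y = p y * p (y + T + T) - p (y + T) ^ 2" for y
  have hT: "h (y + T) = D * h y" for y
  proof -
    have "h (y + T) = p (y + T) * p (y + T + T + T) - p (y + T + T) ^ 2" by (simp add: h_def)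
    also have "\<dots> = D * h y" unfolding rec[of "y + T"] rec[of y] h_def
      by (simp add: algebra_simps power2_eq_square)
    finally show ?thesis .
  qed
  have Bd0: "0 \<le> Bd" using order_trans[OF norm_ge_zero Bd[of 0]] .
  have hb: "\<forall>y. cmod (h y) \<le> Bd * Bd + Bd ^ 2"
  proof
    fix y
    have "cmod (h y) \<le> cmod (p y * p (y + T + T)) + cmod (p (y + T) ^ 2)"
      unfolding h_def by (rule norm_triangle_ineq4)
    also have "\<dots> \<le> Bd * Bd + Bd ^ 2"
      using Bd[of y] Bd[of "y+T+T"] Bd[of "y+T"] norm_ge_zero[of "p y"] norm_ge_zero[of "p (y+T)"]
      by (intro add_mono) (auto simp: norm_mult norm_power Bd0 intro!: mult_mono power_mono)
    finally show "cmod (h y) \<le> Bd * Bd + Bd ^ 2" .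
  qed
  have h0: "h y = 0" for y
  proof (cases "cmod D > 1")
    case True
    show ?thesis by (rule geo_zero[OF _ hb True, of T]) (use hT in simp)
  next
    case False
    with D1 have lt: "cmod D < 1" by simp
    have "cmod (1 / D) > 1" using lt D0 by (simp add: norm_divide)
    moreover have "\<forall>y. h (y + - T) = (1 / D) * h y"
    proof
      fix y
      have "h y = D * h (y + - T)" using hT[of "y + - T"] by simp
      then show "h (y + - T) = (1 / D) * h y" using D0 by simp
    qed
    ultimately show ?thesis using geo_zero[OF _ hb] by blast
  qed
  have H: "p y * p (y + T + T) = p (y + T) ^ 2" for y using h0[of y] by (simp add: h_def)
  have Hm: "p y * p (y + - T + - T) = p (y + - T) ^ 2" for y
    using H[of "y - T - T"] by (simp add: mult.commute)
  have pT: "p (z0 + T) \<noteq> 0"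
  proof
    assume "p (z0 + T) = 0"
    then have "p (z0 + T + T) = 0" using H[of z0] z0 by simp
    then show False using rec[of z0] \<open>p (z0 + T) = 0\<close> D0 z0 by simp
  qed
  have pmT: "p (z0 + - T) \<noteq> 0"
  proof
    assume "p (z0 + - T) = 0"
    then show False using H[of "z0 - T"] z0 by simp
  qed
  define \<rho> where "\<rho> = p (z0 + T) / p z0"
  define \<sigma> where "\<sigma> = p (z0 + - T) / p z0"
  have o1: "p (z0 + real n * T) = \<rho> ^ n * p z0" for n
    using orbit[of p T z0 n] H z0 pT by (simp add: \<rho>_def)
  have o2: "p (z0 + real n * (- T)) = \<sigma> ^ n * p z0" for n
    using orbit[of p "- T" z0 n] Hm z0 pmT by (simp add: \<sigma>_def)
  have r1: "cmod \<rho> \<le> 1"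
    by (rule pow_bounded[OF _ z0, of _ Bd]) (metis o1 Bd)
  have r2: "cmod \<sigma> \<le> 1"
    by (rule pow_bounded[OF _ z0, of _ Bd]) (metis o2 Bd)
  have "p (z0 - T) * p (z0 + T) = p z0 ^ 2" using H[of "z0 - T"] by simp
  then have "\<sigma> * \<rho> = 1" using z0 by (simp add: \<rho>_def \<sigma>_def power2_eq_square)
  then have "cmod \<sigma> * cmod \<rho> = 1" by (metis norm_mult norm_one)
  then have r: "cmod \<rho> = 1" using r1 r2
    by (metis mult_left_le_one_le norm_ge_zero order_antisym mult.commute mult_le_one)
  have "p (z0 + T + T) = \<rho> ^ 2 * p z0" using o1[of 2] by (simp add: algebra_simps)
  moreover have "p (z0 + T) = \<rho> * p z0" using z0 by (simp add: \<rho>_def)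
  ultimately have "\<rho> ^ 2 * p z0 = t * (\<rho> * p z0) - D * p z0" using rec[of z0] by simp
  then have "(\<rho> ^ 2 - t * \<rho> + D) * p z0 = 0" by (simp add: algebra_simps)
  then have root: "\<rho> ^ 2 - t * \<rho> + D = 0" using z0 by simp
  show ?thesis
  proof (intro allI impI)
    fix \<mu>1 \<mu>2
    assume fm: "floquet_multipliers (fund_matrix p1 q1 p2 q2 T) \<mu>1 \<mu>2"
    have ch: "(\<mu> - p1 T) * (\<mu> - q2 T) - p2 T * q1 T = (\<mu> - \<mu>1) * (\<mu> - \<mu>2)" for \<mu>
      using fm by (simp add: floquet_multipliers_def det_char)
    have "D = \<mu>1 * \<mu>2" using ch[of 0] by (simp add: D_def)
    then have nb: "\<not> (cmod \<mu>1 = 1 \<and> cmod \<mu>2 = 1)" using D1 by (auto simp: norm_mult)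
    have "(\<rho> - \<mu>1) * (\<rho> - \<mu>2) = \<rho> ^ 2 - t * \<rho> + D"
      using ch[of \<rho>] by (simp add: t_def D_def algebra_simps power2_eq_square)
    then have "\<rho> = \<mu>1 \<or> \<rho> = \<mu>2" using root by simp
    then show "(cmod \<mu>1 = 1) \<noteq> (cmod \<mu>2 = 1)" using nb r by auto
  qed
qed

end
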